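(* Let $A\in\mathcal A_n$ and $i<j$, $k<l$ in $[n]$. If $R_{ij}^{kl}\in E(A)$, then $\widetilde A+\widetilde R_{ij}^{kl}$ is the corner sum matrix of a (unique) ASM in $\mathcal A_n$; if $R_{ij}^{kl}\in E^*(A)$, then $\widetilde A-\widetilde R_{ij}^{kl}$ is the corner sum matrix of a (unique) ASM in $\mathcal A_n$. Moreover the operator $r_{ij}^{kl}$ is an involution: $r_{ij}^{kl}(r_{ij}^{kl}(A))=A$ for all $A\in\mathcal A_n$.
   Context: An $n\times n$ matrix $A=(a_{ij})$ is an alternating sign matrix (ASM) if all $a_{ij}\in\{-1,0,1\}$, all partial row sums $\sum_{k\le j}a_{ik}$ and partial column sums $\sum_{k\le i}a_{kj}$ lie in $\{0,1\}$, and every full row sum and column sum equals $1$; $\mathcal A_n$ is the set of $n\times n$ ASMs. The corner sum matrix is $\widetilde A(i,j)=\sum_{p\le i,q\le j}a_{pq}$, with $\widetilde A(i,j)=0$ if $i=0$ or $j=0$. For $i<j$, $k<l$ in $[n]$, $R_{ij}^{kl}=\{(p,q): i\le p<j,\ k\le q<l\}$ and $\widetilde R_{ij}^{kl}$ is the $n\times n$ $0/1$ matrix with $1$ exactly at positions in $R_{ij}^{kl}$. $E(A)$ is the set of essential rectangles of $A$: those $R_{ij}^{kl}$ such that for all $(p,q)\in R_{ij}^{kl}$: $\widetilde A(p,k)=\widetilde A(p,k-1)$, $\widetilde A(p,l)=\widetilde A(p,l-1)+1$, $\widetilde A(i,q)=\widetilde A(i-1,q)$, $\widetilde A(j,q)=\widetilde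 A(j-1,q)+1$. $E^*(A)$ is the set of dual essential rectangles: those $R_{ij}^{kl}$ such that for all $(p,q)\in R_{ij}^{kl}$: $\widetilde A(p,k)=\widetilde A(p,k-1)+1$, $\widetilde A(p,l)=\widetilde A(p,l-1)$, $\widetilde A(i,q)=\widetilde A(i-1,q)+1$, $\widetilde A(j,q)=\widetilde A(j-1,q)$. The rectangular operator $r_{ij}^{kl}:\mathcal A_n\to\mathcal A_n$ sends $A$ to the ASM whose corner sum matrix is $\widetilde A+\widetilde R_{ij}^{kl}$ if $R_{ij}^{kl}\in E(A)$, $\widetilde A-\widetilde R_{ij}^{kl}$ if $R_{ij}^{kl}\in E^*(A)$, and $\widetilde A$ otherwise. *)

theory Defs
  imports Main
begin

text \<open>An n x n matrix is a function nat => nat => int, indexed by [n] = {1..n};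
  entries outside [n] x [n] are required to be 0 so that a matrix is determined
  by its n x n block.\<close>

definition is_asm :: "nat \<Rightarrow> (nat \<Rightarrow> nat \<Rightarrow> int) \<Rightarrow> bool" where
  "is_asm n A \<longleftrightarrow>
     (\<forall>i j. (i \<notin> {1..n} \<or> j \<notin> {1..n}) \<longrightarrow> A i j = 0) \<and>
     (\<forall>i\<in>{1..n}. \<forall>j\<in>{1..n}. A i j \<in> {-1, 0, 1}) \<and>
     (\<forall>i\<in>{1..n}. \<forall>j\<in>{1..n}. (\<Sum>k\<in>{1..j}. A i k) \<in> {0, 1}) \<and>
     (\<forall>i\<in>{1..n}. \<forall>j\<in>{1..n}. (\<Sum>k\<in>{1..i}. A k j) \<in> {0, 1}) \<and>
     (\<forall>i\<in>{1..n}. (\<Sum>k\<in>{1..n}. A i k) = 1) \<and>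
     (\<forall>j\<in>{1..n}. (\<Sum>k\<in>{1..n}. A k j) = 1)"

text \<open>Corner sum matrix; it is 0 when i = 0 or j = 0 (empty sums).\<close>
definition corner :: "(nat \<Rightarrow> nat \<Rightarrow> int) \<Rightarrow> nat \<Rightarrow> nat \<Rightarrow> int" where
  "corner A i j = (\<Sum>p\<in>{1..i}. \<Sum>q\<in>{1..j}. A p q)"

definition in_rect :: "nat \<Rightarrow> nat \<Rightarrow> nat \<Rightarrow> nat \<Rightarrow> nat \<Rightarrow> nat \<Rightarrow> bool" where
  "in_rect i j k l p q \<longleftrightarrow> i \<le> p \<and> p < j \<and> k \<le> q \<and> q < l"

definition rect_mat :: "nat \<Rightarrow> nat \<Rightarrow> nat \<Rightarrow> nat \<Rightarrow> nat \<Rightarrow> nat \<Rightarrow> int" where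
  "rect_mat i j k l p q = (if in_rect i j k l p q then 1 else 0)"

definition essential :: "(nat \<Rightarrow> nat \<Rightarrow> int) \<Rightarrow> nat \<Rightarrow> nat \<Rightarrow> nat \<Rightarrow> nat \<Rightarrow> bool" where
  "essential A i j k l \<longleftrightarrow>
     (\<forall>p q. in_rect i j k l p q \<longrightarrow>
        corner A p k = corner A p (k - 1) \<and>
        corner A p l = corner A p (l - 1) + 1 \<and>
        corner A i q = corner A (i - 1) q \<and>
        corner A j q = corner A (j - 1) q + 1)"

definition dual_essential :: "(nat \<Rightarrow> nat \<Rightarrow> int) \<Rightarrow> nat \<Rightarrow> nat \<Rightarrow> nat \<Rightarrow> nat \<Rightarrow> bool" where
  "dual_essential A i j k l \<longleftrightarrow>
     (\<forall>p q. in_rect i j k l p q \<longrightarrow>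
        corner A p k = corner A p (k - 1) + 1 \<and>
        corner A p l = corner A p (l - 1) \<and>
        corner A i q = corner A (i - 1) q + 1 \<and>
        corner A j q = corner A (j - 1) q)"

definition shifted_asm ::
  "nat \<Rightarrow> (nat \<Rightarrow> nat \<Rightarrow> int) \<Rightarrow> int \<Rightarrow> nat \<Rightarrow> nat \<Rightarrow> nat \<Rightarrow> nat \<Rightarrow> (nat \<Rightarrow> nat \<Rightarrow> int) \<Rightarrow> bool" where
  "shifted_asm n A s i j k l B \<longleftrightarrow> is_asm n B \<and>
     (\<forall>p\<in>{1..n}. \<forall>q\<in>{1..n}. corner B p q = corner A p q + s * rect_mat i j k l p q)"

definition rect_op :: "nat \<Rightarrow> nat \<Rightarrow> nat \<Rightarrow> nat \<Rightarrow> nat \<Rightarrow> (nat \<Rightarrow> nat \<Rightarrow> int) \<Rightarrow> (nat \<Rightarrow> nat \<Rightarrow> int)" where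
  "rect_op n i j k l A =
     (if essential A i j k l then (THE B. shifted_asm n A 1 i j k l B)
      else if dual_essential A i j k l then (THE B. shifted_asm n A (-1) i j k l B)
      else A)"

end

theory Submission
  imports Defs
begin

definition good :: "nat \<Rightarrow> (nat \<Rightarrow> nat \<Rightarrow> int) \<Rightarrow> bool" where
  "good n F \<longleftrightarrow> (\<forall>q. F 0 q = 0) \<and> (\<forall>p. F p 0 = 0) \<and>
    (\<forall>p\<in>{1..n}. \<forall>q\<in>{1..n}. F p q - F (p-1) q \<in> {0,1} \<and> F p q - F p (q-1) \<in> {0,1}) \<and>
    (\<forall>p\<in>{1..n}. F p n - F (p-1) n = 1) \<and> (\<forall>q\<in>{1..n}. F n q - F n (q-1) = 1)"

lemma tele: "(\<Sum>x\<in>{1..m::nat}. f x - f (x - 1)) = f m - (f 0 :: int)"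
  by (induction m) (auto simp: sum.cl_ivl_Suc)

lemma corner_0 [simp]: "corner A 0 q = 0" "corner A p 0 = 0"
  by (auto simp: corner_def)

lemma corner_row: "corner A (Suc m) q = corner A m q + (\<Sum>k\<in>{1..q}. A (Suc m) k)"
  by (simp add: corner_def sum.cl_ivl_Suc)

lemma corner_col: "corner A p (Suc m) = corner A p m + (\<Sum>k\<in>{1..p}. A k (Suc m))"
  by (simp add: corner_def sum.cl_ivl_Suc sum.distrib)

lemma asm_good:
  assumes "is_asm n A" shows "good n (corner A)"
proof -
  have r: "corner A p q - corner A (p-1) q = (\<Sum>k\<in>{1..q}. A p k)" if "p \<ge> 1" for p q
    using that corner_row[of A "p-1" q] by simp
  have c: "corner A p q - corner A p (q-1) = (\<Sum>k\<in>{1..p}. A k q)" if "q \<ge> 1" for p q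
    using that corner_col[of A p "q-1"] by simp
  have A: "\<forall>p\<in>{1..n}. \<forall>q\<in>{1..n}. (\<Sum>k\<in>{1..q}. A p k) \<in> {0,1} \<and> (\<Sum>k\<in>{1..p}. A k q) \<in> {0,1}"
     "\<forall>p\<in>{1..n}. (\<Sum>k\<in>{1..n}. A p k) = 1" "\<forall>q\<in>{1..n}. (\<Sum>k\<in>{1..n}. A k q) = 1"
    using assms unfolding is_asm_def by auto
  show ?thesis unfolding good_def
  proof (intro conjI ballI allI)
    fix p q assume "p \<in> {1..n}" "q \<in> {1..n}"
    then show "corner A p q - corner A (p-1) q \<in> {0,1}" "corner A p q - corner A p (q-1) \<in> {0,1}"
      using A(1) r[of p q] c[of q p] by auto
  next
    fix p assume "p \<in> {1..n}" then show "corner A p n - corner A (p-1) n = 1" using A(2) r[of p n] by auto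
  next
    fix q assume "q \<in> {1..n}" then show "corner A n q - corner A n (q-1) = 1" using A(3) c[of q n] by auto
  qed auto
qed

lemma good_asm:
  assumes g: "good n F"
  shows "\<exists>B. is_asm n B \<and> (\<forall>p\<le>n. \<forall>q\<le>n. corner B p q = F p q)"
proof -
  define B where "B p q = (if p \<in> {1..n} \<and> q \<in> {1..n} then F p q - F (p-1) q - F p (q-1) + F (p-1) (q-1) else 0)" for p q
  have F0: "F 0 q = 0" "F p 0 = 0" for p q using g by (auto simp: good_def)
  have rowsum: "(\<Sum>k\<in>{1..q}. B p k) = F p q - F (p-1) q" if "p \<in> {1..n}" "q \<le> n" for p q
  proof -
    have "(\<Sum>k\<in>{1..q}. B p k) = (\<Sum>k\<in>{1..q}. (\<lambda>k. F p k - F (p-1) k) k - (\<lambda>k. F p k - F (p-1) k) (k-1))"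
      using that by (intro sum.cong) (auto simp: B_def)
    also have "\<dots> = F p q - F (p-1) q" by (subst tele) (simp add: F0)
    finally show ?thesis .
  qed
  have colsum: "(\<Sum>k\<in>{1..p}. B k q) = F p q - F p (q-1)" if "q \<in> {1..n}" "p \<le> n" for p q
  proof -
    have "(\<Sum>k\<in>{1..p}. B k q) = (\<Sum>k\<in>{1..p}. (\<lambda>k. F k q - F k (q-1)) k - (\<lambda>k. F k q - F k (q-1)) (k-1))"
      using that by (intro sum.cong) (auto simp: B_def)
    also have "\<dots> = F p q - F p (q-1)" by (subst tele) (simp add: F0)
    finally show ?thesis .
  qed
  have cor: "corner B p q = F p q" if "p \<le> n" "q \<le> n" for p q
  proof -
    have "corner B p q = (\<Sum>p'\<in>{1..p}. (\<lambda>p'. F p' q) p' - (\<lambda>p'. F p' q) (p'-1))"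
      unfolding corner_def using that rowsum by (intro sum.cong refl) (metis atLeastAtMost_iff le_trans)
    also have "\<dots> = F p q" by (subst tele) (simp add: F0)
    finally show ?thesis .
  qed
  have gg: "F p q - F (p-1) q \<in> {0,1}" "F p q - F p (q-1) \<in> {0,1}" if "p \<in> {1..n}" "q \<in> {1..n}" for p q
    using g that by (auto simp: good_def)
  have ent: "B p q \<in> {-1,0,1}" if "p \<in> {1..n}" "q \<in> {1..n}" for p q
  proof (cases "q = 1")
    case True then show ?thesis using gg[OF that] that by (auto simp: B_def F0)
  next
    case False
    then have "q - 1 \<in> {1..n}" using that by auto
    from gg[OF that] gg[OF that(1) this] False show ?thesis using that by (auto simp: B_def)
  qed
  have gb: "\<forall>p\<in>{1..n}. F p n - F (p-1) n = 1" "\<forall>q\<in>{1..n}. F n q - F n (q-1) = 1"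
    using g by (auto simp: good_def)
  have "is_asm n B"
    unfolding is_asm_def
  proof (intro conjI ballI allI impI)
    fix p q :: nat assume "p \<notin> {1..n} \<or> q \<notin> {1..n}" then show "B p q = 0" by (auto simp: B_def)
  next
    fix p q assume a: "p \<in> {1..n}" "q \<in> {1..n}"
    show "B p q \<in> {-1,0,1}" using ent[OF a] .
    show "(\<Sum>k\<in>{1..q}. B p k) \<in> {0,1}" using rowsum[of p q] gg[OF a] a by auto
    show "(\<Sum>k\<in>{1..p}. B k q) \<in> {0,1}" using colsum[of q p] gg[OF a] a by auto
  next
    fix p assume a: "p \<in> {1..n}" show "(\<Sum>k\<in>{1..n}. B p k) = 1" using rowsum[of p n] gb a by auto
  next
    fix q assume a: "q \<in> {1..n}" show "(\<Sum>k\<in>{1..n}. B k q) = 1" using colsum[of q n] gb a by auto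
  qed
  then show ?thesis using cor by blast
qed

lemma recon:
  assumes "p \<ge> 1" "q \<ge> 1"
  shows "B p q = corner B p q - corner B (p-1) q - corner B p (q-1) + corner B (p-1) (q-1)"
proof -
  obtain a b where ab: "p = Suc a" "q = Suc b" using assms by (metis Suc_pred' less_eq_Suc_le One_nat_def)
  show ?thesis unfolding ab using corner_row[of B a "Suc b"] corner_row[of B a b]
    by (simp add: sum.cl_ivl_Suc)
qed

lemma corner_unique:
  assumes "is_asm n B1" "is_asm n B2" "\<forall>p\<in>{1..n}. \<forall>q\<in>{1..n}. corner B1 p q = corner B2 p q"
  shows "B1 = B2"
proof (intro ext)
  fix p q
  have e: "corner B1 p' q' = corner B2 p' q'" if "p' \<le> n" "q' \<le> n" for p' q'
    using assms(3) that by (cases "p' = 0"; cases "q' = 0") auto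
  show "B1 p q = B2 p q"
  proof (cases "p \<in> {1..n} \<and> q \<in> {1..n}")
    case True
    then show ?thesis using recon[of p q B1] recon[of p q B2] e[of p q] e[of "p-1" q] e[of p "q-1"] e[of "p-1" "q-1"]
      by auto
  next
    case False then show ?thesis using assms(1,2) unfolding is_asm_def by auto
  qed
qed

lemma ess_row: "essential A i j k l \<Longrightarrow> i \<le> p \<Longrightarrow> p < j \<Longrightarrow> k < l \<Longrightarrow>
   corner A p k = corner A p (k-1) \<and> corner A p l = corner A p (l-1) + 1"
  unfolding essential_def in_rect_def by (metis order_refl)
lemma ess_col: "essential A i j k l \<Longrightarrow> k \<le> q \<Longrightarrow> q < l \<Longrightarrow> i < j \<Longrightarrow>
   corner A i q = corner A (i-1) q \<and> corner A j q = corner A (j-1) q + 1"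
  unfolding essential_def in_rect_def by (metis order_refl)
lemma dess_row: "dual_essential A i j k l \<Longrightarrow> i \<le> p \<Longrightarrow> p < j \<Longrightarrow> k < l \<Longrightarrow>
   corner A p k = corner A p (k-1) + 1 \<and> corner A p l = corner A p (l-1)"
  unfolding dual_essential_def in_rect_def by (metis order_refl)
lemma dess_col: "dual_essential A i j k l \<Longrightarrow> k \<le> q \<Longrightarrow> q < l \<Longrightarrow> i < j \<Longrightarrow>
   corner A i q = corner A (i-1) q + 1 \<and> corner A j q = corner A (j-1) q"
  unfolding dual_essential_def in_rect_def by (metis order_refl)

lemma shift_good:
  assumes g: "good n C" and par: "1 \<le> i" "1 \<le> k" "j \<le> n" "l \<le> n" "i < j" "k < l"
    and s: "s = 1 \<or> s = -1"
    and row: "\<And>p. i \<le> p \<Longrightarrow> p < j \<Longrightarrow> C p k - C p (k-1) = (1 - s) div 2 \<and> C p l - C p (l-1) = (1 + s) div 2"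
    and col: "\<And>q. k \<le> q \<Longrightarrow> q < l \<Longrightarrow> C i q - C (i-1) q = (1 - s) div 2 \<and> C j q - C (j-1) q = (1 + s) div 2"
  shows "good n (\<lambda>p q. C p q + s * rect_mat i j k l p q)"
  unfolding good_def
proof (intro conjI ballI allI)
  fix p q assume a: "p \<in> {1..n}" "q \<in> {1..n}"
  have c1: "C p q - C (p-1) q \<in> {0,1}" "C p q - C p (q-1) \<in> {0,1}" using g a by (auto simp: good_def)
  show "C p q + s * rect_mat i j k l p q - (C (p - 1) q + s * rect_mat i j k l (p - 1) q) \<in> {0, 1}"
  proof (cases "k \<le> q \<and> q < l")
    case True
    then have cc: "C i q - C (i-1) q = (1 - s) div 2" "C j q - C (j-1) q = (1 + s) div 2" using col[of q] by auto
    consider "p = i" | "p = j" | "p \<noteq> i" "p \<noteq> j" by blast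
    then show ?thesis
    proof cases
      case 1 then show ?thesis using cc True s par by (auto simp: rect_mat_def in_rect_def)
    next
      case 2 then show ?thesis using cc True s par by (auto simp: rect_mat_def in_rect_def)
    next
      case 3
      then have "rect_mat i j k l p q = rect_mat i j k l (p-1) q" using a by (auto simp: rect_mat_def in_rect_def)
      then show ?thesis using c1 by simp
    qed
  next
    case False then show ?thesis using c1 by (auto simp: rect_mat_def in_rect_def)
  qed
  show "C p q + s * rect_mat i j k l p q - (C p (q - 1) + s * rect_mat i j k l p (q - 1)) \<in> {0, 1}"
  proof (cases "i \<le> p \<and> p < j")
    case True
    then have cc: "C p k - C p (k-1) = (1 - s) div 2" "C p l - C p (l-1) = (1 + s) div 2" using row[of p] by auto
    consider "q = k" | "q = l" | "q \<noteq> k" "q \<noteq> l" by blast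
    then show ?thesis
    proof cases
      case 1 then show ?thesis using cc True s par by (auto simp: rect_mat_def in_rect_def)
    next
      case 2 then show ?thesis using cc True s par by (auto simp: rect_mat_def in_rect_def)
    next
      case 3
      then have "rect_mat i j k l p q = rect_mat i j k l p (q-1)" using a by (auto simp: rect_mat_def in_rect_def)
      then show ?thesis using c1 by simp
    qed
  next
    case False then show ?thesis using c1 by (auto simp: rect_mat_def in_rect_def)
  qed
next
  fix p assume "p \<in> {1..n}" then show "C p n + s * rect_mat i j k l p n - (C (p - 1) n + s * rect_mat i j k l (p - 1) n) = 1"
    using g par by (auto simp: good_def rect_mat_def in_rect_def)
next
  fix q assume "q \<in> {1..n}" then show "C n q + s * rect_mat i j k l n q - (C n (q - 1) + s * rect_mat i j k l n (q - 1)) = 1"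
    using g par by (auto simp: good_def rect_mat_def in_rect_def)
qed (use g par in \<open>auto simp: good_def rect_mat_def in_rect_def\<close>)

definition cnd :: "nat \<Rightarrow> nat \<Rightarrow> nat \<Rightarrow> nat \<Rightarrow> (nat \<Rightarrow> nat \<Rightarrow> int) \<Rightarrow> int \<Rightarrow> bool" where
  "cnd i j k l C s \<longleftrightarrow> (\<forall>p. i \<le> p \<and> p < j \<longrightarrow> C p k - C p (k-1) = (1 - s) div 2 \<and> C p l - C p (l-1) = (1 + s) div 2)
     \<and> (\<forall>q. k \<le> q \<and> q < l \<longrightarrow> C i q - C (i-1) q = (1 - s) div 2 \<and> C j q - C (j-1) q = (1 + s) div 2)"

lemma ess_cnd: "i < j \<Longrightarrow> k < l \<Longrightarrow> essential A i j k l \<longleftrightarrow> cnd i j k l (corner A) 1"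
proof
  assume "i < j" "k < l" "essential A i j k l"
  then show "cnd i j k l (corner A) 1" unfolding cnd_def using ess_row[of A i j k l] ess_col[of A i j k l] by auto
next
  assume "cnd i j k l (corner A) 1" then show "essential A i j k l"
    unfolding cnd_def essential_def in_rect_def by auto
qed

lemma dess_cnd: "i < j \<Longrightarrow> k < l \<Longrightarrow> dual_essential A i j k l \<longleftrightarrow> cnd i j k l (corner A) (-1)"
proof
  assume "i < j" "k < l" "dual_essential A i j k l"
  then show "cnd i j k l (corner A) (-1)" unfolding cnd_def using dess_row[of A i j k l] dess_col[of A i j k l] by auto
next
  assume "cnd i j k l (corner A) (-1)" then show "dual_essential A i j k l"
    unfolding cnd_def dual_essential_def in_rect_def by auto
qed

lemma not_both: "i < j \<Longrightarrow> k < l \<Longrightarrow> cnd i j k l C 1 \<Longrightarrow> cnd i j k l C (-1) \<Longrightarrow> False"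
proof -
  assume a: "i < j" "k < l" "cnd i j k l C 1" "cnd i j k l C (-1)"
  then have "C i k - C i (k-1) = 0" "C i k - C i (k-1) = 1" unfolding cnd_def by auto
  then show False by simp
qed

lemma shift_ex1:
  assumes A: "is_asm n A" and par: "1 \<le> i" "1 \<le> k" "j \<le> n" "l \<le> n" "i < j" "k < l"
    and s: "s = 1 \<or> s = -1" and c: "cnd i j k l (corner A) s"
  shows "\<exists>!B. shifted_asm n A s i j k l B"
proof -
  have "good n (\<lambda>p q. corner A p q + s * rect_mat i j k l p q)"
    using shift_good[OF asm_good[OF A] par s] c unfolding cnd_def by blast
  from good_asm[OF this] obtain B where B: "is_asm n B" "\<forall>p\<le>n. \<forall>q\<le>n. corner B p q = corner A p q + s * rect_mat i j k l p q"
    by blast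
  then have "shifted_asm n A s i j k l B" unfolding shifted_asm_def by auto
  moreover have "B' = B" if "shifted_asm n A s i j k l B'" for B'
    using that B by (intro corner_unique[of n]) (auto simp: shifted_asm_def)
  ultimately show ?thesis by blast
qed

lemma shifted_corner:
  assumes "shifted_asm n A s i j k l B" "1 \<le> i" "1 \<le> k" "p \<le> n" "q \<le> n"
  shows "corner B p q = corner A p q + s * rect_mat i j k l p q"
  using assms by (cases "p = 0"; cases "q = 0") (auto simp: shifted_asm_def rect_mat_def in_rect_def)

lemma flip:
  assumes B: "shifted_asm n A s i j k l B" and par: "1 \<le> i" "1 \<le> k" "j \<le> n" "l \<le> n" "i < j" "k < l"
    and s: "s = 1 \<or> s = -1" and c: "cnd i j k l (corner A) s"
  shows "cnd i j k l (corner B) (-s)"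
  unfolding cnd_def
proof (intro conjI allI impI)
  fix p assume p: "i \<le> p \<and> p < j"
  have e: "corner B p x = corner A p x + s * rect_mat i j k l p x" if "x \<le> n" for x
    using shifted_corner[OF B par(1,2)] p par that by auto
  have cc: "corner A p k - corner A p (k-1) = (1 - s) div 2 \<and> corner A p l - corner A p (l-1) = (1 + s) div 2"
    using c p unfolding cnd_def by blast
  show "corner B p k - corner B p (k - 1) = (1 - - s) div 2"
    using e[of k] e[of "k-1"] cc s p par by (auto simp: rect_mat_def in_rect_def)
  show "corner B p l - corner B p (l - 1) = (1 + - s) div 2"
    using e[of l] e[of "l-1"] cc s p par by (auto simp: rect_mat_def in_rect_def)
next
  fix q assume q: "k \<le> q \<and> q < l"
  have e: "corner B x q = corner A x q + s * rect_mat i j k l x q" if "x \<le> n" for x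
    using shifted_corner[OF B par(1,2)] q par that by auto
  have cc: "corner A i q - corner A (i-1) q = (1 - s) div 2 \<and> corner A j q - corner A (j-1) q = (1 + s) div 2"
    using c q unfolding cnd_def by blast
  show "corner B i q - corner B (i - 1) q = (1 - - s) div 2"
    using e[of i] e[of "i-1"] cc s q par by (auto simp: rect_mat_def in_rect_def)
  show "corner B j q - corner B (j - 1) q = (1 + - s) div 2"
    using e[of j] e[of "j-1"] cc s q par by (auto simp: rect_mat_def in_rect_def)
qed

lemma shift_back:
  assumes B: "shifted_asm n A s i j k l B" and A: "is_asm n A"
  shows "shifted_asm n B (-s) i j k l A"
  using assms by (auto simp: shifted_asm_def)

lemma invol:
  assumes A: "is_asm n A" and par: "1 \<le> i" "1 \<le> k" "j \<le> n" "l \<le> n" "i < j" "k < l"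
    and s: "s = 1 \<or> s = -1" and c: "cnd i j k l (corner A) s"
    and r: "rect_op n i j k l A = (THE B. shifted_asm n A s i j k l B)"
    and r2: "\<And>B. cnd i j k l (corner B) (-s) \<Longrightarrow> rect_op n i j k l B = (THE B'. shifted_asm n B (-s) i j k l B')"
  shows "rect_op n i j k l (rect_op n i j k l A) = A"
proof -
  have ex: "\<exists>!B. shifted_asm n A s i j k l B" using shift_ex1[OF A par s c] .
  define B where "B = (THE B. shifted_asm n A s i j k l B)"
  have hB: "shifted_asm n A s i j k l B" unfolding B_def using theI'[OF ex] .
  have cB: "cnd i j k l (corner B) (-s)" using flip[OF hB par s c] .
  have aB: "is_asm n B" using hB by (simp add: shifted_asm_def)
  have ex2: "\<exists>!B'. shifted_asm n B (-s) i j k l B'" using shift_ex1[OF aB par _ cB] s by auto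
  have "(THE B'. shifted_asm n B (-s) i j k l B') = A"
    using ex2 shift_back[OF hB A] by (metis the1_equality)
  then show ?thesis using r r2[OF cB] B_def by simp
qed

theorem mainTheorem2:
  fixes n i j k l :: nat
  assumes "i \<in> {1..n}" "j \<in> {1..n}" "k \<in> {1..n}" "l \<in> {1..n}" "i < j" "k < l"
  shows "(\<forall>A. is_asm n A \<and> essential A i j k l \<longrightarrow> (\<exists>!B. shifted_asm n A 1 i j k l B))
       \<and> (\<forall>A. is_asm n A \<and> dual_essential A i j k l \<longrightarrow> (\<exists>!B. shifted_asm n A (-1) i j k l B))
       \<and> (\<forall>A. is_asm n A \<longrightarrow> rect_op n i j k l (rect_op n i j k l A) = A)"
proof -
  have par: "1 \<le> i" "1 \<le> k" "j \<le> n" "l \<le> n" "i < j" "k < l" using assms by auto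
  have E: "essential A i j k l \<longleftrightarrow> cnd i j k l (corner A) 1" for A using ess_cnd par by blast
  have D: "dual_essential A i j k l \<longleftrightarrow> cnd i j k l (corner A) (-1)" for A using dess_cnd par by blast
  have NB: "\<not> (essential A i j k l \<and> dual_essential A i j k l)" for A
    using not_both[OF par(5,6)] E D by blast
  have p1: "\<forall>A. is_asm n A \<and> essential A i j k l \<longrightarrow> (\<exists>!B. shifted_asm n A 1 i j k l B)"
    using shift_ex1[OF _ par] E by auto
  have p2: "\<forall>A. is_asm n A \<and> dual_essential A i j k l \<longrightarrow> (\<exists>!B. shifted_asm n A (-1) i j k l B)"
    using shift_ex1[OF _ par] D by auto
  have p3: "rect_op n i j k l (rect_op n i j k l A) = A" if A: "is_asm n A" for A
  proof (cases "essential A i j k l")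
    case True
    show ?thesis
    proof (rule invol[OF A par, of 1])
      show "cnd i j k l (corner A) 1" using True E by blast
      show "rect_op n i j k l A = (THE B. shifted_asm n A 1 i j k l B)" using True by (simp add: rect_op_def)
      fix B assume "cnd i j k l (corner B) (- 1)"
      then show "rect_op n i j k l B = (THE B'. shifted_asm n B (- 1) i j k l B')"
      proof -
        have "dual_essential B i j k l" "\<not> essential B i j k l" using D NB \<open>cnd i j k l (corner B) (- 1)\<close> by blast+
        then show ?thesis by (simp add: rect_op_def)
      qed
    qed simp
  next
    case F: False
    show ?thesis
    proof (cases "dual_essential A i j k l")
      case True
      show ?thesis
      proof (rule invol[OF A par, of "-1"])
        show "cnd i j k l (corner A) (-1)" using True D by blast
        show "rect_op n i j k l A = (THE B. shifted_asm n A (-1) i j k l B)" using True F by (simp add: rect_op_def)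
        fix B assume "cnd i j k l (corner B) (- (- 1))"
        then show "rect_op n i j k l B = (THE B'. shifted_asm n B (- (-1)) i j k l B')"
          using E by (simp add: rect_op_def)
      qed simp
    next
      case False
      then show ?thesis using F by (simp add: rect_op_def)
    qed
  qed
  show ?thesis using p1 p2 p3 by blast
qed

end
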